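(* Let $R$ be a semiprime ring with identity and $f$ an automorphism of $R$. (a) If $R$ is commutative, then the following are equivalent: (i) $f$ is $X$-inner; (ii) $\mathrm{ann}_R((\mathrm{id}-f)(R))\neq 0$; (iii) there is a nonzero ideal $I$ of $R$ such that $f$ is the identity on $I$. (b) If $R$ is commutative and von Neumann regular, then $f$ is $X$-inner if and only if there exists a nonzero idempotent $e\in R$ such that $f$ is the identity on $eR$. (c) If $R$ is von Neumann regular and $f$ is $X$-inner, then $f$ is corner-inner.
   Context: An automorphism $f$ of a semiprime ring $R$ is $X$-inner if there is a nonzero element $u$ of the left Martindale quotient ring of $R$ with $f(r)u=ur$ for all $r\in R$. An automorphism $f$ of $R$ is corner-inner if there exist a nonzero idempotent $e\in R$ and, setting $e'=f^{-1}(e)$, elements $u\in eRe'$ and $v\in e'Re$ such that (a) $uv=e$ and $vu=e'$; (b) $f(x)=uxv$ for all $x\in e'Re'$; (c) $f^{-1}(y)=vyu$ for all $y\in eRe$. Here $\mathrm{ann}_R(S)=\{x\in R: sx=0 \text{ for all } s\in S\}$. *)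

theory Defs
  imports Main
begin

definition rideal :: "'a::ring_1 set \<Rightarrow> bool" where
  "rideal I \<longleftrightarrow> 0 \<in> I \<and> (\<forall>a\<in>I. \<forall>b\<in>I. a + b \<in> I) \<and> (\<forall>a\<in>I. - a \<in> I)
     \<and> (\<forall>a\<in>I. \<forall>r. r * a \<in> I \<and> a * r \<in> I)"

definition semiprime :: "'a::ring_1 itself \<Rightarrow> bool" where
  "semiprime _ \<longleftrightarrow> (\<forall>a::'a. (\<forall>r. a * r * a = 0) \<longrightarrow> a = 0)"

definition von_neumann_regular :: "'a::ring_1 itself \<Rightarrow> bool" where
  "von_neumann_regular _ \<longleftrightarrow> (\<forall>a::'a. \<exists>x. a * x * a = a)"

definition ring_automorphism :: "('a::ring_1 \<Rightarrow> 'a) \<Rightarrow> bool" where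
  "ring_automorphism f \<longleftrightarrow> bij f \<and> (\<forall>x y. f (x + y) = f x + f y)
     \<and> (\<forall>x y. f (x * y) = f x * f y) \<and> f 1 = 1"

definition ann :: "'a::ring_1 set \<Rightarrow> 'a set" where
  "ann S = {x. \<forall>s\<in>S. s * x = 0}"

definition ideal_gen :: "'a::ring_1 set \<Rightarrow> 'a set" where
  "ideal_gen S = \<Inter>{K. rideal K \<and> S \<subseteq> K}"

definition ideal_prod :: "'a::ring_1 set \<Rightarrow> 'a set \<Rightarrow> 'a set" where
  "ideal_prod J I = ideal_gen {x * y |x y. x \<in> J \<and> y \<in> I}"

text \<open>Dense ideals: two-sided ideals with zero (right) annihilator
 (for semiprime rings left and right annihilators of ideals coincide).\<close>
definition dense_ideal :: "'a::ring_1 set \<Rightarrow> bool" where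
  "dense_ideal I \<longleftrightarrow> rideal I \<and> (\<forall>x. (\<forall>a\<in>I. a * x = 0) \<longrightarrow> x = 0)"

text \<open>Left Martindale quotient ring: representatives are pairs (I, phi) with I a dense
ideal and phi : I \<rightarrow> R a homomorphism of left R-modules (maps written on the right,
a.q = phi a).\<close>
definition mq_reps :: "('a::ring_1 set \<times> ('a \<Rightarrow> 'a)) set" where
  "mq_reps = {(I, \<phi>). dense_ideal I \<and> (\<forall>a\<in>I. \<forall>b\<in>I. \<phi> (a + b) = \<phi> a + \<phi> b)
      \<and> (\<forall>r. \<forall>a\<in>I. \<phi> (r * a) = r * \<phi> a)}"

definition mq_rel :: "(('a::ring_1 set \<times> ('a \<Rightarrow> 'a)) \<times> ('a set \<times> ('a \<Rightarrow> 'a))) set" where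
  "mq_rel = {((I, \<phi>), (J, \<psi>)). (I, \<phi>) \<in> mq_reps \<and> (J, \<psi>) \<in> mq_reps \<and>
      (\<exists>K. dense_ideal K \<and> K \<subseteq> I \<inter> J \<and> (\<forall>a\<in>K. \<phi> a = \<psi> a))}"

definition martindale_Q :: "('a::ring_1 set \<times> ('a \<Rightarrow> 'a)) set set" where
  "martindale_Q = mq_reps // mq_rel"

definition mq_class :: "'a::ring_1 set \<times> ('a \<Rightarrow> 'a) \<Rightarrow> ('a set \<times> ('a \<Rightarrow> 'a)) set" where
  "mq_class p = mq_rel `` {p}"

text \<open>Product of representatives: a(pq) = (a p) q, defined on the ideal JI.\<close>
definition rep_mult :: "'a::ring_1 set \<times> ('a \<Rightarrow> 'a) \<Rightarrow> 'a set \<times> ('a \<Rightarrow> 'a) \<Rightarrow> 'a set \<times> ('a \<Rightarrow> 'a)" where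
  "rep_mult p q = (ideal_prod (fst q) (fst p), snd q \<circ> snd p)"

definition mq_mult :: "('a::ring_1 set \<times> ('a \<Rightarrow> 'a)) set \<Rightarrow> ('a set \<times> ('a \<Rightarrow> 'a)) set
     \<Rightarrow> ('a set \<times> ('a \<Rightarrow> 'a)) set" where
  "mq_mult U V = mq_class (rep_mult (SOME p. p \<in> U) (SOME q. q \<in> V))"

definition mq_zero :: "('a::ring_1 set \<times> ('a \<Rightarrow> 'a)) set" where
  "mq_zero = mq_class (UNIV, \<lambda>_. 0)"

definition mq_emb :: "'a::ring_1 \<Rightarrow> ('a set \<times> ('a \<Rightarrow> 'a)) set" where
  "mq_emb r = mq_class (UNIV, \<lambda>a. a * r)"

definition X_inner :: "('a::ring_1 \<Rightarrow> 'a) \<Rightarrow> bool" where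
  "X_inner f \<longleftrightarrow> (\<exists>u\<in>martindale_Q. u \<noteq> mq_zero \<and>
      (\<forall>r. mq_mult (mq_emb (f r)) u = mq_mult u (mq_emb r)))"

definition corner :: "'a::ring_1 \<Rightarrow> 'a \<Rightarrow> 'a set" where
  "corner e e' = {e * r * e' |r. True}"

definition corner_inner :: "('a::ring_1 \<Rightarrow> 'a) \<Rightarrow> bool" where
  "corner_inner f \<longleftrightarrow> (\<exists>e. e * e = e \<and> e \<noteq> 0 \<and>
     (let e' = inv f e in \<exists>u\<in>corner e e'. \<exists>v\<in>corner e' e.
        u * v = e \<and> v * u = e' \<and> (\<forall>x\<in>corner e' e'. f x = u * x * v)
        \<and> (\<forall>y\<in>corner e e. inv f y = v * y * u)))"

end

theory Submission
  imports Defs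
begin


lemma rideal_D:
  assumes "rideal I"
  shows "0 \<in> I" "a \<in> I \<Longrightarrow> b \<in> I \<Longrightarrow> a + b \<in> I" "a \<in> I \<Longrightarrow> - a \<in> I"
    "a \<in> I \<Longrightarrow> r * a \<in> I" "a \<in> I \<Longrightarrow> a * r \<in> I"
  using assms unfolding rideal_def by auto

lemma rideal_UNIV: "rideal (UNIV::'a::ring_1 set)"
  unfolding rideal_def by auto

lemma dense_UNIV: "dense_ideal (UNIV::'a::ring_1 set)"
  unfolding dense_ideal_def using rideal_UNIV by (metis UNIV_I mult_1)

lemma dense_D:
  assumes "dense_ideal K" "\<And>a. a \<in> K \<Longrightarrow> a * x = 0"
  shows "x = 0"
  using assms unfolding dense_ideal_def by auto

lemma dense_D2:
  fixes x y :: "'a::ring_1"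
  assumes "dense_ideal K" "\<And>a. a \<in> K \<Longrightarrow> a * x = a * y"
  shows "x = y"
proof -
  have "x - y = 0"
    by (rule dense_D[OF assms(1)]) (simp add: right_diff_distrib assms(2))
  then show ?thesis by simp
qed

lemma dense_rideal: "dense_ideal K \<Longrightarrow> rideal K"
  unfolding dense_ideal_def by auto

lemma rideal_Int: "rideal I \<Longrightarrow> rideal J \<Longrightarrow> rideal (I \<inter> J)"
  unfolding rideal_def by auto

lemma dense_Int:
  assumes "dense_ideal I" "dense_ideal J"
  shows "dense_ideal (I \<inter> J)"
proof -
  have "rideal (I \<inter> J)" using assms by (simp add: dense_rideal rideal_Int)
  moreover have "x = 0" if h: "\<forall>a\<in>I \<inter> J. a * x = 0" for x
  proof (rule dense_D[OF assms(2)])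
    fix j assume j: "j \<in> J"
    show "j * x = 0"
    proof (rule dense_D[OF assms(1)])
      fix i assume i: "i \<in> I"
      have "i * j \<in> I \<inter> J" using i j rideal_D[OF dense_rideal[OF assms(1)]]
          rideal_D[OF dense_rideal[OF assms(2)]] by auto
      then show "i * (j * x) = 0" using h by (simp add: mult.assoc[symmetric])
    qed
  qed
  ultimately show ?thesis unfolding dense_ideal_def by auto
qed

lemma dense_mono: "dense_ideal K \<Longrightarrow> rideal I \<Longrightarrow> K \<subseteq> I \<Longrightarrow> dense_ideal I"
  unfolding dense_ideal_def by auto

lemma ideal_gen_rideal: "rideal (ideal_gen S)"
  unfolding ideal_gen_def rideal_def by auto

lemma ideal_gen_sub: "S \<subseteq> ideal_gen S"
  unfolding ideal_gen_def by auto

lemma ideal_gen_least: "rideal K \<Longrightarrow> S \<subseteq> K \<Longrightarrow> ideal_gen S \<subseteq> K"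
  unfolding ideal_gen_def by auto

lemma ideal_prod_rideal: "rideal (ideal_prod J I)"
  unfolding ideal_prod_def by (rule ideal_gen_rideal)

lemma ideal_prod_sub:
  assumes "rideal J" "rideal I"
  shows "ideal_prod J I \<subseteq> J \<inter> I"
  unfolding ideal_prod_def
  by (rule ideal_gen_least) (use assms in \<open>auto simp: rideal_Int dest: rideal_D\<close>)

lemma ideal_prod_dense:
  assumes J: "dense_ideal J" and I: "dense_ideal I"
  shows "dense_ideal (ideal_prod J I)"
proof -
  have "x = 0" if h: "\<forall>a\<in>ideal_prod J I. a * x = 0" for x
  proof (rule dense_D[OF I])
    fix i assume i: "i \<in> I"
    show "i * x = 0"
    proof (rule dense_D[OF J])
      fix j assume j: "j \<in> J"
      have "j * i \<in> {x * y |x y. x \<in> J \<and> y \<in> I}" using i j by blast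
      then have "j * i \<in> ideal_prod J I" unfolding ideal_prod_def
        using ideal_gen_sub by (rule subsetD[rotated])
      then show "j * (i * x) = 0" using h by (simp add: mult.assoc[symmetric])
    qed
  qed
  then show ?thesis unfolding dense_ideal_def using ideal_prod_rideal by auto
qed

lemma reps_D:
  assumes "(I, \<phi>) \<in> mq_reps"
  shows "dense_ideal I" "a \<in> I \<Longrightarrow> b \<in> I \<Longrightarrow> \<phi> (a + b) = \<phi> a + \<phi> b"
    "a \<in> I \<Longrightarrow> \<phi> (r * a) = r * \<phi> a"
  using assms unfolding mq_reps_def by auto

lemma map_into:
  assumes p: "(I, \<alpha>) \<in> mq_reps" and J: "rideal J" and a: "a \<in> ideal_prod J I"
  shows "\<alpha> a \<in> J"
proof -
  have I: "rideal I" using reps_D(1)[OF p] dense_rideal by blast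
  note I0 = rideal_D(1)[OF I] and Iadd = rideal_D(2)[OF I] and Ineg = rideal_D(3)[OF I]
    and Il = rideal_D(4)[OF I] and Ir = rideal_D(5)[OF I]
  note J0 = rideal_D(1)[OF J] and Jadd = rideal_D(2)[OF J] and Jneg = rideal_D(3)[OF J]
    and Jl = rideal_D(4)[OF J]
  note add = reps_D(2)[OF p] and lin = reps_D(3)[OF p]
  define T where "T = {a \<in> I. \<forall>s. \<alpha> (a * s) \<in> J}"
  have Tmem: "x \<in> T \<longleftrightarrow> x \<in> I \<and> (\<forall>s. \<alpha> (x * s) \<in> J)" for x
    unfolding T_def by simp
  have "rideal T"
    unfolding rideal_def
  proof (intro conjI ballI allI)
    have "\<alpha> 0 = \<alpha> (0 * 0)" by simp
    also have "\<dots> = 0 * \<alpha> 0" using lin[OF I0] .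
    finally have "\<alpha> 0 = 0" by simp
    then show "0 \<in> T" unfolding Tmem using I0 J0 by simp
  next
    fix a b assume a: "a \<in> T" and b: "b \<in> T"
    show "a + b \<in> T" unfolding Tmem
    proof (intro conjI allI)
      show "a + b \<in> I" using a b Iadd Tmem by blast
      fix s
      have "a * s \<in> I" "b * s \<in> I" using a b Ir Tmem by blast+
      then have "\<alpha> ((a + b) * s) = \<alpha> (a * s) + \<alpha> (b * s)"
        using add by (simp add: distrib_right)
      moreover have "\<alpha> (a * s) \<in> J" "\<alpha> (b * s) \<in> J" using a b Tmem by blast+
      ultimately show "\<alpha> ((a + b) * s) \<in> J" using Jadd by simp
    qed
  next
    fix a assume a: "a \<in> T"
    show "- a \<in> T" unfolding Tmem
    proof (intro conjI allI)
      show "- a \<in> I" using a Ineg Tmem by blast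
      fix s
      have "(- 1) * (a * s) = - a * s" by (simp only: mult_minus1 minus_mult_left)
      then have "\<alpha> (- a * s) = \<alpha> ((- 1) * (a * s))" by (rule arg_cong[symmetric])
      also have "\<dots> = (- 1) * \<alpha> (a * s)"
      proof (rule lin)
        show "a * s \<in> I" using a Ir Tmem by blast
      qed
      finally have e: "\<alpha> (- a * s) = (- 1) * \<alpha> (a * s)" .
      have "\<alpha> (a * s) \<in> J" using a Tmem by blast
      then show "\<alpha> (- a * s) \<in> J" unfolding e by (rule Jl)
    qed
  next
    fix a r assume a: "a \<in> T"
    show "r * a \<in> T" unfolding Tmem
    proof (intro conjI allI)
      show "r * a \<in> I" using a Il Tmem by blast
      fix s
      have "a * s \<in> I" using a Ir Tmem by blast
      then have e: "\<alpha> (r * a * s) = r * \<alpha> (a * s)"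
        using lin by (simp add: mult.assoc)
      have "\<alpha> (a * s) \<in> J" using a Tmem by blast
      then show "\<alpha> (r * a * s) \<in> J" unfolding e by (rule Jl)
    qed
    show "a * r \<in> T" unfolding Tmem
    proof (intro conjI allI)
      show "a * r \<in> I" using a Ir Tmem by blast
      fix s
      have "\<alpha> (a * (r * s)) \<in> J" using a Tmem by blast
      then show "\<alpha> (a * r * s) \<in> J" by (simp add: mult.assoc)
    qed
  qed
  moreover have "{x * y |x y. x \<in> J \<and> y \<in> I} \<subseteq> T"
  proof
    fix z assume "z \<in> {x * y |x y. x \<in> J \<and> y \<in> I}"
    then obtain x y where z: "z = x * y" "x \<in> J" "y \<in> I" by blast
    show "z \<in> T" unfolding Tmem
    proof (intro conjI allI)
      show "z \<in> I" using z Il by simp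
      fix s
      have "y * s \<in> I" using z Ir by simp
      then have e: "\<alpha> (z * s) = x * \<alpha> (y * s)"
        using lin z by (simp add: mult.assoc)
      have "\<alpha> (y * s) \<in> J \<Longrightarrow> x * \<alpha> (y * s) \<in> J"
        using rideal_D(5)[OF J z(2)] rideal_D(4)[OF J] by blast
      then show "\<alpha> (z * s) \<in> J" unfolding e using rideal_D(5)[OF J z(2)] by blast
    qed
  qed
  ultimately have "ideal_prod J I \<subseteq> T" unfolding ideal_prod_def by (rule ideal_gen_least)
  then have "\<alpha> (a * 1) \<in> J" using a Tmem by blast
  then show ?thesis by simp
qed

lemma rep_mult_reps:
  assumes p: "(I, \<alpha>) \<in> mq_reps" and q: "(J, \<beta>) \<in> mq_reps"
  shows "rep_mult (I, \<alpha>) (J, \<beta>) \<in> mq_reps"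
proof -
  have I: "rideal I" and J: "rideal J"
    using reps_D(1)[OF p] reps_D(1)[OF q] dense_rideal by blast+
  have sub: "ideal_prod J I \<subseteq> J \<inter> I" by (rule ideal_prod_sub[OF J I])
  have d: "dense_ideal (ideal_prod J I)"
    by (rule ideal_prod_dense[OF reps_D(1)[OF q] reps_D(1)[OF p]])
  have add: "\<beta> (\<alpha> (a + b)) = \<beta> (\<alpha> a) + \<beta> (\<alpha> b)"
    if "a \<in> ideal_prod J I" "b \<in> ideal_prod J I" for a b
  proof -
    have ab: "a \<in> I" "b \<in> I" "\<alpha> a \<in> J" "\<alpha> b \<in> J"
      using that sub map_into[OF p J] by auto
    then show ?thesis using reps_D(2)[OF p] reps_D(2)[OF q] by simp
  qed
  have lin: "\<beta> (\<alpha> (r * a)) = r * \<beta> (\<alpha> a)" if "a \<in> ideal_prod J I" for a r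
    using that sub reps_D(3)[OF p] reps_D(3)[OF q] map_into[OF p J] by auto
  show ?thesis unfolding rep_mult_def mq_reps_def using d add lin by auto
qed

lemma rep_mult_reps': "p \<in> mq_reps \<Longrightarrow> q \<in> mq_reps \<Longrightarrow> rep_mult p q \<in> mq_reps"
  using rep_mult_reps by (metis prod.collapse)

lemma rel_refl: "p \<in> mq_reps \<Longrightarrow> (p, p) \<in> mq_rel"
proof -
  assume p: "p \<in> mq_reps"
  obtain I \<phi> where "p = (I, \<phi>)" by (cases p)
  then show ?thesis using p unfolding mq_rel_def mq_reps_def by auto
qed

lemma rel_sym: "(p, q) \<in> mq_rel \<Longrightarrow> (q, p) \<in> mq_rel"
  unfolding mq_rel_def by (cases p; cases q) auto

lemma rel_trans:
  assumes "(p, q) \<in> mq_rel" "(q, s) \<in> mq_rel"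
  shows "(p, s) \<in> mq_rel"
proof -
  obtain I \<phi> J \<psi> S \<chi> where pq: "p = (I, \<phi>)" "q = (J, \<psi>)" "s = (S, \<chi>)"
    by (metis prod.collapse)
  obtain K1 where K1: "dense_ideal K1" "K1 \<subseteq> I \<inter> J" "\<forall>a\<in>K1. \<phi> a = \<psi> a"
    using assms(1) pq unfolding mq_rel_def by auto
  obtain K2 where K2: "dense_ideal K2" "K2 \<subseteq> J \<inter> S" "\<forall>a\<in>K2. \<psi> a = \<chi> a"
    using assms(2) pq unfolding mq_rel_def by auto
  have "dense_ideal (K1 \<inter> K2)" using dense_Int K1 K2 by blast
  then show ?thesis using assms K1 K2 pq unfolding mq_rel_def by auto
qed

lemma rel_class_eq: "(p, q) \<in> mq_rel \<Longrightarrow> mq_class p = mq_class q"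
  unfolding mq_class_def using rel_sym rel_trans by blast

lemma class_self: "p \<in> mq_reps \<Longrightarrow> p \<in> mq_class p"
  by (metis Image_singleton_iff mq_class_def rel_refl)

lemma class_reps: "q \<in> mq_class p \<Longrightarrow> (p, q) \<in> mq_rel \<and> q \<in> mq_reps"
  unfolding mq_class_def mq_rel_def by auto

lemma class_eq_rel:
  assumes "p \<in> mq_reps" "q \<in> mq_reps" "mq_class p = mq_class q"
  shows "(p, q) \<in> mq_rel"
  using class_self[OF assms(2)] assms(3) class_reps by metis

lemma extend_lin:
  assumes p: "(I, \<alpha>) \<in> mq_reps" and K: "dense_ideal K" "K \<subseteq> I"
    and h: "\<forall>a\<in>K. \<alpha> (a * t) = \<alpha> a * s"
  shows "\<forall>a\<in>I. \<alpha> (a * t) = \<alpha> a * s"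
proof
  fix a assume a: "a \<in> I"
  have I: "rideal I" using reps_D(1)[OF p] dense_rideal by blast
  show "\<alpha> (a * t) = \<alpha> a * s"
  proof (rule dense_D2[OF K(1)])
    fix c assume c: "c \<in> K"
    have ca: "c * a \<in> K" using rideal_D(5)[OF dense_rideal[OF K(1)] c] .
    have "c * \<alpha> (a * t) = \<alpha> (c * a * t)"
      using reps_D(3)[OF p] a rideal_D(5)[OF I] by (simp add: mult.assoc)
    also have "\<dots> = \<alpha> (c * a) * s" using h ca by blast
    also have "\<dots> = c * (\<alpha> a * s)" using reps_D(3)[OF p] a by (simp add: mult.assoc)
    finally show "c * \<alpha> (a * t) = c * (\<alpha> a * s)" .
  qed
qed

lemma emb_rep: "(UNIV, \<lambda>a. a * t) \<in> mq_reps"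
  unfolding mq_reps_def using dense_UNIV by (auto simp: distrib_right mult.assoc)

lemma emb_class:
  assumes "(L, \<psi>) \<in> mq_class (UNIV, \<lambda>a. a * t)"
  shows "(L, \<psi>) \<in> mq_reps \<and> (\<forall>a\<in>L. \<psi> a = a * t)"
proof -
  have r: "(L, \<psi>) \<in> mq_reps" and rel: "((UNIV, \<lambda>a. a * t), (L, \<psi>)) \<in> mq_rel"
    using class_reps[OF assms] by auto
  obtain K where K: "dense_ideal K" "K \<subseteq> L" "\<forall>a\<in>K. a * t = \<psi> a"
    using rel unfolding mq_rel_def by auto
  have L: "rideal L" using reps_D(1)[OF r] dense_rideal by blast
  have "\<psi> a = a * t" if a: "a \<in> L" for a
  proof (rule dense_D2[OF K(1)])
    fix c assume c: "c \<in> K"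
    have "c * a \<in> K" using rideal_D(5)[OF dense_rideal[OF K(1)] c] .
    then have "\<psi> (c * a) = c * a * t" using K by auto
    then show "c * \<psi> a = c * (a * t)" using reps_D(3)[OF r a] by (simp add: mult.assoc)
  qed
  then show ?thesis using r by auto
qed

lemma transfer_lin:
  assumes rel: "((I, \<alpha>), (I', \<beta>)) \<in> mq_rel" and h: "\<forall>a\<in>I. \<alpha> (a * t) = \<alpha> a * s"
  shows "\<forall>a\<in>I'. \<beta> (a * t) = \<beta> a * s"
proof -
  obtain K where K: "dense_ideal K" "K \<subseteq> I \<inter> I'" "\<forall>a\<in>K. \<alpha> a = \<beta> a"
    using rel unfolding mq_rel_def by auto
  have r: "(I', \<beta>) \<in> mq_reps" using rel unfolding mq_rel_def by auto
  have "\<forall>a\<in>K. \<beta> (a * t) = \<beta> a * s"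
  proof
    fix a assume a: "a \<in> K"
    have "a * t \<in> K" using rideal_D(5)[OF dense_rideal[OF K(1)] a] .
    then have "\<beta> (a * t) = \<alpha> (a * t)" using K(3) by simp
    also have "\<dots> = \<alpha> a * s" using h a K(2) by auto
    also have "\<dots> = \<beta> a * s" using K(3) a by simp
    finally show "\<beta> (a * t) = \<beta> a * s" .
  qed
  then show ?thesis using extend_lin[OF r K(1)] K(2) by blast
qed

lemma mult_iff:
  assumes p: "(J, \<phi>) \<in> mq_reps"
  shows "mq_mult (mq_emb t) (mq_class (J, \<phi>)) = mq_mult (mq_class (J, \<phi>)) (mq_emb s)
    \<longleftrightarrow> (\<forall>a\<in>J. \<phi> (a * t) = \<phi> a * s)"
proof -
  define U where "U = (SOME q. q \<in> mq_class (J, \<phi>))"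
  define P where "P = (SOME q. q \<in> mq_class (UNIV, \<lambda>a. a * t))"
  define P2 where "P2 = (SOME q. q \<in> mq_class (UNIV, \<lambda>a. a * s))"
  have "U \<in> mq_class (J, \<phi>)" unfolding U_def by (rule someI, rule class_self[OF p])
  moreover obtain J' \<phi>' where U: "U = (J', \<phi>')" by (cases U)
  ultimately have Ur: "(J', \<phi>') \<in> mq_reps" and relU: "((J, \<phi>), (J', \<phi>')) \<in> mq_rel"
    using class_reps by auto
  have "P \<in> mq_class (UNIV, \<lambda>a. a * t)" unfolding P_def by (rule someI, rule class_self[OF emb_rep])
  moreover obtain L \<psi> where P: "P = (L, \<psi>)" by (cases P)
  ultimately have Pr: "(L, \<psi>) \<in> mq_reps" and \<psi>: "\<forall>a\<in>L. \<psi> a = a * t"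
    using emb_class by auto
  have "P2 \<in> mq_class (UNIV, \<lambda>a. a * s)" unfolding P2_def by (rule someI, rule class_self[OF emb_rep])
  moreover obtain L2 \<psi>2 where P2: "P2 = (L2, \<psi>2)" by (cases P2)
  ultimately have P2r: "(L2, \<psi>2) \<in> mq_reps" and \<psi>2: "\<forall>a\<in>L2. \<psi>2 a = a * s"
    using emb_class by auto
  define X where "X = rep_mult (L, \<psi>) (J', \<phi>')"
  define Y where "Y = rep_mult (J', \<phi>') (L2, \<psi>2)"
  have eq1: "mq_mult (mq_emb t) (mq_class (J, \<phi>)) = mq_class X"
    unfolding mq_mult_def mq_emb_def X_def P_def[symmetric] U_def[symmetric] P U by (rule refl)
  have eq2: "mq_mult (mq_class (J, \<phi>)) (mq_emb s) = mq_class Y"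
    unfolding mq_mult_def mq_emb_def Y_def P2_def[symmetric] U_def[symmetric] P2 U by (rule refl)
  have Xr: "X \<in> mq_reps" unfolding X_def by (rule rep_mult_reps[OF Pr Ur])
  have Yr: "Y \<in> mq_reps" unfolding Y_def by (rule rep_mult_reps[OF Ur P2r])
  have J': "rideal J'" and L: "rideal L" and L2: "rideal L2"
    using reps_D(1)[OF Ur] reps_D(1)[OF Pr] reps_D(1)[OF P2r] dense_rideal by blast+
  have tr: "(\<forall>a\<in>J. \<phi> (a * t) = \<phi> a * s) \<longleftrightarrow> (\<forall>a\<in>J'. \<phi>' (a * t) = \<phi>' a * s)"
    using transfer_lin[OF relU] transfer_lin[OF rel_sym[OF relU]] by blast
  have "(\<forall>a\<in>J'. \<phi>' (a * t) = \<phi>' a * s) \<longleftrightarrow> (X, Y) \<in> mq_rel"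
  proof
    assume h: "\<forall>a\<in>J'. \<phi>' (a * t) = \<phi>' a * s"
    define K where "K = ideal_prod J' L \<inter> ideal_prod L2 J'"
    have Kd: "dense_ideal K" unfolding K_def
      by (intro dense_Int ideal_prod_dense reps_D(1)[OF Ur] reps_D(1)[OF Pr] reps_D(1)[OF P2r])
    have "\<phi>' (\<psi> a) = \<psi>2 (\<phi>' a)" if a: "a \<in> K" for a
    proof -
      have "a \<in> J'" "a \<in> L" using a ideal_prod_sub[OF J' L] K_def by auto
      moreover have "\<phi>' a \<in> L2" using a K_def map_into[OF Ur L2] by auto
      ultimately show ?thesis using h \<psi> \<psi>2 by simp
    qed
    then show "(X, Y) \<in> mq_rel" using Xr Yr Kd unfolding mq_rel_def X_def Y_def rep_mult_def K_def
      by auto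
  next
    assume "(X, Y) \<in> mq_rel"
    then obtain K where K: "dense_ideal K" "K \<subseteq> ideal_prod J' L \<inter> ideal_prod L2 J'"
        "\<forall>a\<in>K. \<phi>' (\<psi> a) = \<psi>2 (\<phi>' a)"
      unfolding mq_rel_def X_def Y_def rep_mult_def by auto
    have "\<forall>a\<in>K. \<phi>' (a * t) = \<phi>' a * s"
    proof
      fix a assume a: "a \<in> K"
      have "a \<in> L" using a K(2) ideal_prod_sub[OF J' L] by auto
      moreover have "\<phi>' a \<in> L2" using a K(2) map_into[OF Ur L2] by auto
      ultimately have e1: "\<psi> a = a * t" and e2: "\<psi>2 (\<phi>' a) = \<phi>' a * s" using \<psi> \<psi>2 by auto
      have "\<phi>' (\<psi> a) = \<psi>2 (\<phi>' a)" using K(3) a by blast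
      then show "\<phi>' (a * t) = \<phi>' a * s" using e1 e2 by simp
    qed
    moreover have "K \<subseteq> J'" using K(2) ideal_prod_sub[OF J' L] by auto
    ultimately show "\<forall>a\<in>J'. \<phi>' (a * t) = \<phi>' a * s" using extend_lin[OF Ur K(1)] by blast
  qed
  moreover have "mq_class X = mq_class Y \<longleftrightarrow> (X, Y) \<in> mq_rel"
    using class_eq_rel[OF Xr Yr] rel_class_eq by blast
  ultimately show ?thesis using eq1 eq2 tr by simp
qed

lemma zero_iff:
  assumes p: "(J, \<phi>) \<in> mq_reps"
  shows "mq_class (J, \<phi>) = mq_zero \<longleftrightarrow> (\<forall>a\<in>J. \<phi> a = 0)"
proof
  assume "mq_class (J, \<phi>) = mq_zero"
  then have "((J, \<phi>), (UNIV, \<lambda>_. 0)) \<in> mq_rel"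
  proof -
    have z: "(UNIV, \<lambda>_::'a. 0) \<in> mq_reps" using emb_rep[of 0] by simp
    show ?thesis using class_eq_rel[OF p z] \<open>mq_class (J, \<phi>) = mq_zero\<close>
      unfolding mq_zero_def by simp
  qed
  then obtain K where K: "dense_ideal K" "K \<subseteq> J" "\<forall>a\<in>K. \<phi> a = 0"
    unfolding mq_rel_def by auto
  show "\<forall>a\<in>J. \<phi> a = 0"
  proof
    fix a assume a: "a \<in> J"
    show "\<phi> a = 0"
    proof (rule dense_D[OF K(1)])
      fix c assume c: "c \<in> K"
      have "c * a \<in> K" using rideal_D(5)[OF dense_rideal[OF K(1)] c] .
      then show "c * \<phi> a = 0" using K(3) reps_D(3)[OF p a] by metis
    qed
  qed
next
  assume h: "\<forall>a\<in>J. \<phi> a = 0"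
  have "((UNIV, \<lambda>_. 0), (J, \<phi>)) \<in> mq_rel"
  proof -
    have z: "(UNIV, \<lambda>_::'a. 0) \<in> mq_reps" using emb_rep[of 0] by simp
    show ?thesis unfolding mq_rel_def using p h z reps_D(1)[OF p] by auto
  qed
  then show "mq_class (J, \<phi>) = mq_zero" unfolding mq_zero_def using rel_class_eq by metis
qed

lemma X_inner_iff:
  "X_inner f \<longleftrightarrow> (\<exists>J \<phi>. (J, \<phi>) \<in> mq_reps \<and> (\<exists>a\<in>J. \<phi> a \<noteq> 0)
      \<and> (\<forall>r. \<forall>a\<in>J. \<phi> (a * f r) = \<phi> a * r))"
proof
  assume "X_inner f"
  then obtain u where u: "u \<in> martindale_Q" "u \<noteq> mq_zero"
    "\<forall>r. mq_mult (mq_emb (f r)) u = mq_mult u (mq_emb r)"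
    unfolding X_inner_def by blast
  obtain J \<phi> where p: "(J, \<phi>) \<in> mq_reps" and ud: "u = mq_class (J, \<phi>)"
    using u(1) unfolding martindale_Q_def quotient_def mq_class_def by auto
  show "\<exists>J \<phi>. (J, \<phi>) \<in> mq_reps \<and> (\<exists>a\<in>J. \<phi> a \<noteq> 0)
      \<and> (\<forall>r. \<forall>a\<in>J. \<phi> (a * f r) = \<phi> a * r)"
  proof (intro exI conjI)
    show "(J, \<phi>) \<in> mq_reps" by (rule p)
    show "\<exists>a\<in>J. \<phi> a \<noteq> 0" using zero_iff[OF p] u(2) ud by blast
    show "\<forall>r. \<forall>a\<in>J. \<phi> (a * f r) = \<phi> a * r"
    proof
      fix r
      show "\<forall>a\<in>J. \<phi> (a * f r) = \<phi> a * r"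
        using mult_iff[OF p, of "f r" r] u(3) ud by simp
    qed
  qed
next
  assume "\<exists>J \<phi>. (J, \<phi>) \<in> mq_reps \<and> (\<exists>a\<in>J. \<phi> a \<noteq> 0)
      \<and> (\<forall>r. \<forall>a\<in>J. \<phi> (a * f r) = \<phi> a * r)"
  then obtain J \<phi> where p: "(J, \<phi>) \<in> mq_reps" and nz: "\<exists>a\<in>J. \<phi> a \<noteq> 0"
    and h: "\<forall>r. \<forall>a\<in>J. \<phi> (a * f r) = \<phi> a * r" by blast
  have "mq_class (J, \<phi>) \<in> martindale_Q"
    unfolding martindale_Q_def quotient_def mq_class_def using p by auto
  then show "X_inner f" unfolding X_inner_def
  proof (intro bexI conjI allI)
    show "mq_class (J, \<phi>) \<noteq> mq_zero" using zero_iff[OF p] nz by blast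
    fix r
    show "mq_mult (mq_emb (f r)) (mq_class (J, \<phi>)) = mq_mult (mq_class (J, \<phi>)) (mq_emb r)"
      using mult_iff[OF p, of "f r" r] h by simp
  qed simp
qed



lemma aut_D:
  assumes "ring_automorphism f"
  shows "f (x + y) = f x + f y" "f (x * y) = f x * f y" "f 1 = 1" "bij f"
  using assms unfolding ring_automorphism_def by auto

lemma aut_zero: assumes "ring_automorphism f" shows "f 0 = 0"
proof -
  have "f (0 + 0) = f 0 + f 0" using aut_D(1)[OF assms] .
  then show ?thesis by simp
qed

lemma aut_diff: assumes "ring_automorphism f" shows "f (x - y) = f x - f y"
proof -
  have "f (x - y + y) = f (x - y) + f y" using aut_D(1)[OF assms] .
  then show ?thesis by (simp add: algebra_simps)
qed

lemma aut_inj: assumes "ring_automorphism f" "f x = f y" shows "x = y"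
  using aut_D(4)[OF assms(1)] assms(2) unfolding bij_def inj_def by blast

lemma aut_inv: assumes "ring_automorphism f" shows "f (inv f y) = y" "inv f (f x) = x"
  using aut_D(4)[OF assms] by (simp_all add: bij_is_surj surj_f_inv_f bij_is_inj)

lemma aut_inv_eq: assumes "ring_automorphism f" "f x = y" shows "inv f y = x"
  using aut_inv[OF assms(1)] assms(2) by blast

lemma reduced:
  fixes a :: "'a::ring_1"
  assumes sp: "semiprime TYPE('a)" and comm: "\<forall>x y::'a. x * y = y * x" and aa: "a * a = 0"
  shows "a = 0"
proof -
  have "\<forall>r. a * r * a = 0"
  proof
    fix r
    have "a * r * a = (r * a) * a" by (rule arg_cong[where f="\<lambda>z. z * a"], rule comm[rule_format])
    also have "\<dots> = r * (a * a)" by (simp add: mult.assoc)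
    finally have "a * r * a = r * (a * a)" .
    then show "a * r * a = 0" using aa by simp
  qed
  then show ?thesis using sp unfolding semiprime_def by blast
qed

lemma part_a1:
  fixes f :: "'a::ring_1 \<Rightarrow> 'a"
  assumes comm: "\<forall>x y::'a. x * y = y * x" and X: "X_inner f"
  shows "ann (range (\<lambda>r. r - f r)) \<noteq> {0}"
proof -
  obtain J \<phi> where p: "(J, \<phi>) \<in> mq_reps" and nz: "\<exists>a\<in>J. \<phi> a \<noteq> 0"
    and h: "\<forall>r. \<forall>a\<in>J. \<phi> (a * f r) = \<phi> a * r" using X X_inner_iff by blast
  obtain b where b: "b \<in> J" "\<phi> b \<noteq> 0" using nz by blast
  have "\<phi> b \<in> ann (range (\<lambda>r. r - f r))" unfolding ann_def
  proof (intro CollectI ballI)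
    fix s assume "s \<in> range (\<lambda>r. r - f r)"
    then obtain r where s: "s = r - f r" by blast
    have "\<phi> b * r = \<phi> (b * f r)" using h b by simp
    also have "\<dots> = \<phi> (f r * b)" by (rule arg_cong[where f=\<phi>], rule comm[rule_format])
    also have "\<dots> = f r * \<phi> b" using reps_D(3)[OF p b(1)] .
    finally have 1: "\<phi> b * r = f r * \<phi> b" .
    have "r * \<phi> b = f r * \<phi> b" by (subst comm[rule_format, of r "\<phi> b"]) (rule 1)
    then show "s * \<phi> b = 0" using s by (simp add: left_diff_distrib)
  qed
  then show ?thesis using b by blast
qed

lemma part_a2:
  fixes f :: "'a::ring_1 \<Rightarrow> 'a"
  assumes sp: "semiprime TYPE('a)" and aut: "ring_automorphism f"
    and comm: "\<forall>x y::'a. x * y = y * x" and nz: "ann (range (\<lambda>r. r - f r)) \<noteq> {0}"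
  shows "\<exists>I. rideal I \<and> I \<noteq> {0} \<and> (\<forall>x\<in>I. f x = x)"
proof -
  define I where "I = ann (range (\<lambda>r. r - f r))"
  have mem: "x \<in> I \<longleftrightarrow> (\<forall>r. (r - f r) * x = 0)" for x unfolding I_def ann_def by auto
  have "rideal I" unfolding rideal_def
  proof (intro conjI ballI allI)
    show "0 \<in> I" using mem by simp
    fix a b assume "a \<in> I" "b \<in> I" then show "a + b \<in> I" using mem by (simp add: distrib_left)
  next
    fix a assume "a \<in> I" then show "- a \<in> I" using mem by simp
  next
    fix a r assume a: "a \<in> I"
    show "r * a \<in> I" unfolding mem
    proof
      fix s
      have "(s - f s) * (r * a) = ((s - f s) * r) * a" by (simp add: mult.assoc)
      also have "\<dots> = (r * (s - f s)) * a" by (subst comm[rule_format, of "s - f s" r]) (rule refl)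
      also have "\<dots> = r * ((s - f s) * a)" by (simp add: mult.assoc)
      finally have "(s - f s) * (r * a) = r * ((s - f s) * a)" .
      then show "(s - f s) * (r * a) = 0" using a mem by simp
    qed
    show "a * r \<in> I" unfolding mem
    proof
      fix s
      have "(s - f s) * (a * r) = ((s - f s) * a) * r" by (simp add: mult.assoc)
      then show "(s - f s) * (a * r) = 0" using a mem by simp
    qed
  qed
  moreover have "\<forall>x\<in>I. f x = x"
  proof
    fix x assume x: "x \<in> I"
    have fx: "f x \<in> I" unfolding mem
    proof
      fix r
      have "r = f (inv f r)" using aut_inv[OF aut] by simp
      then obtain r0 where r0: "r = f r0" by blast
      have "(r - f r) * f x = f ((r0 - f r0) * x)"
        using r0 aut_D(2)[OF aut] aut_diff[OF aut] by simp
      also have "\<dots> = 0" using x mem aut_zero[OF aut] by simp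
      finally show "(r - f r) * f x = 0" .
    qed
    have "(x - f x) * (x - f x) = (x - f x) * x - (x - f x) * f x" by (simp add: right_diff_distrib)
    also have "\<dots> = 0" using x fx mem by simp
    finally have "x - f x = 0" using reduced[OF sp comm] by blast
    then show "f x = x" by simp
  qed
  ultimately show ?thesis using nz I_def by blast
qed

lemma fixed_mult:
  fixes f :: "'a::ring_1 \<Rightarrow> 'a"
  assumes aut: "ring_automorphism f" and I: "rideal I" and fixd: "\<forall>x\<in>I. f x = x" and i: "i \<in> I"
  shows "i * f r = i * r"
proof -
  have "f (i * r) = i * r" using fixd rideal_D(5)[OF I i] by blast
  then show ?thesis using aut_D(2)[OF aut] fixd i by simp
qed

lemma part_a3:
  fixes f :: "'a::ring_1 \<Rightarrow> 'a"
  assumes aut: "ring_automorphism f" and comm: "\<forall>x y::'a. x * y = y * x"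
    and I: "rideal I" "I \<noteq> {0}" "\<forall>x\<in>I. f x = x"
  shows "ann (range (\<lambda>r. r - f r)) \<noteq> {0}"
proof -
  obtain i where i: "i \<in> I" "i \<noteq> 0" using I(2) rideal_D(1)[OF I(1)] by blast
  have "i \<in> ann (range (\<lambda>r. r - f r))" unfolding ann_def
  proof (intro CollectI ballI)
    fix s assume "s \<in> range (\<lambda>r. r - f r)"
    then obtain r where s: "s = r - f r" by blast
    have "i * f r = i * r" using fixed_mult[OF aut I(1) I(3) i(1)] .
    have "f r * i = i * f r" by (rule comm[rule_format])
    also have "\<dots> = i * r" by fact
    also have "\<dots> = r * i" by (rule comm[rule_format])
    finally have "f r * i = r * i" .
    then show "s * i = 0" using s by (simp add: left_diff_distrib)
  qed
  then show ?thesis using i by blast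
qed



lemma part_a4:
  fixes f :: "'a::ring_1 \<Rightarrow> 'a"
  assumes sp: "semiprime TYPE('a)" and aut: "ring_automorphism f"
    and comm: "\<forall>x y::'a. x * y = y * x"
    and I: "rideal I" "I \<noteq> {0}" "\<forall>x\<in>I. f x = x"
  shows "X_inner f"
proof -
  define A where "A = {b. \<forall>i\<in>I. i * b = 0}"
  define D where "D = {i + b |i b. i \<in> I \<and> b \<in> A}"
  define \<pi> where "\<pi> x = (THE i. i \<in> I \<and> x - i \<in> A)" for x
  have A_diff: "b - b' \<in> A" if "b \<in> A" "b' \<in> A" for b b'
    using that unfolding A_def by (simp add: right_diff_distrib)
  have A_add: "b + b' \<in> A" if "b \<in> A" "b' \<in> A" for b b'
    using that unfolding A_def by (simp add: distrib_left)
  have A_lmult: "r * b \<in> A" if b: "b \<in> A" for b r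
  proof -
    have "i * (r * b) = 0" if i: "i \<in> I" for i
    proof -
      have "i * (r * b) = (i * r) * b" by (simp add: mult.assoc)
      also have "\<dots> = (r * i) * b" by (subst comm[rule_format, of i r]) (rule refl)
      also have "\<dots> = r * (i * b)" by (simp add: mult.assoc)
      also have "\<dots> = 0" using b i A_def by simp
      finally show ?thesis .
    qed
    then show ?thesis unfolding A_def by blast
  qed
  have A_rmult: "b * r \<in> A" if "b \<in> A" for b r
    using that unfolding A_def by (simp add: mult.assoc[symmetric])
  have IA: "d = 0" if "d \<in> I" "d \<in> A" for d
    using that reduced[OF sp comm] unfolding A_def by blast
  have piD: "\<pi> x = i" if "x = i + b" "i \<in> I" "b \<in> A" for x i b
    unfolding \<pi>_def
  proof (rule the_equality)
    show "i \<in> I \<and> x - i \<in> A" using that by simp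
    fix i' assume i': "i' \<in> I \<and> x - i' \<in> A"
    have "(x - i') - b \<in> A" using A_diff i' that by blast
    moreover have "(x - i') - b = i - i'" using that by simp
    moreover have "i - i' \<in> I"
    proof -
      have "- i' \<in> I" using rideal_D(3)[OF I(1)] i' by blast
      then have "i + - i' \<in> I" using rideal_D(2)[OF I(1) \<open>i \<in> I\<close>] by blast
      then show ?thesis by simp
    qed
    ultimately have "i - i' = 0" using IA[of "i - i'"] by simp
    then show "i' = i" by simp
  qed
  have D_rideal: "rideal D" unfolding rideal_def
  proof (intro conjI ballI allI)
    show "0 \<in> D" unfolding D_def using rideal_D(1)[OF I(1)] A_def by force
  next
    fix a b assume "a \<in> D" "b \<in> D"
    then obtain i1 b1 i2 b2 where "a = i1 + b1" "i1 \<in> I" "b1 \<in> A" "b = i2 + b2" "i2 \<in> I" "b2 \<in> A"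
      unfolding D_def by blast
    then have "a + b = (i1 + i2) + (b1 + b2)" "i1 + i2 \<in> I" "b1 + b2 \<in> A"
      using rideal_D[OF I(1)] A_add by (auto simp: algebra_simps)
    then show "a + b \<in> D" unfolding D_def by blast
  next
    fix a assume "a \<in> D"
    then obtain i1 b1 where "a = i1 + b1" "i1 \<in> I" "b1 \<in> A" unfolding D_def by blast
    then have "- a = (- i1) + (- b1)" "- i1 \<in> I" "- b1 \<in> A"
      using rideal_D[OF I(1)] A_lmult[of b1 "- 1"] by auto
    then show "- a \<in> D" unfolding D_def by blast
  next
    fix a r assume "a \<in> D"
    then obtain i1 b1 where a: "a = i1 + b1" "i1 \<in> I" "b1 \<in> A" unfolding D_def by blast
    then have "r * a = r * i1 + r * b1" "r * i1 \<in> I" "r * b1 \<in> A"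
      using rideal_D[OF I(1)] A_lmult by (auto simp: distrib_left)
    then show "r * a \<in> D" unfolding D_def by blast
    have "a * r = i1 * r + b1 * r" "i1 * r \<in> I" "b1 * r \<in> A"
      using a rideal_D[OF I(1)] A_rmult by (auto simp: distrib_right)
    then show "a * r \<in> D" unfolding D_def by blast
  qed
  have ID: "i \<in> D" if "i \<in> I" for i
  proof -
    have "0 \<in> A" unfolding A_def by simp
    then show ?thesis unfolding D_def using that by force
  qed
  have AD: "b \<in> D" if "b \<in> A" for b
    unfolding D_def using that rideal_D(1)[OF I(1)] by force
  have D_dense: "dense_ideal D" unfolding dense_ideal_def
  proof (intro conjI allI impI)
    show "rideal D" by (rule D_rideal)
    fix x assume h: "\<forall>a\<in>D. a * x = 0"
    then have "x \<in> A" unfolding A_def using ID by blast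
    then have "x * x = 0" using h AD by blast
    then show "x = 0" using reduced[OF sp comm] by blast
  qed
  have rep: "(D, \<pi>) \<in> mq_reps" unfolding mq_reps_def
  proof (intro CollectI case_prodI conjI ballI allI)
    show "dense_ideal D" by (rule D_dense)
  next
    fix a b assume "a \<in> D" "b \<in> D"
    then obtain i1 b1 i2 b2 where h: "a = i1 + b1" "i1 \<in> I" "b1 \<in> A" "b = i2 + b2" "i2 \<in> I" "b2 \<in> A"
      unfolding D_def by blast
    then have "a + b = (i1 + i2) + (b1 + b2)" "i1 + i2 \<in> I" "b1 + b2 \<in> A"
      using rideal_D[OF I(1)] A_add by (auto simp: algebra_simps)
    then have "\<pi> (a + b) = i1 + i2" by (rule piD)
    moreover have "\<pi> a = i1" using h(1-3) by (rule piD)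
    moreover have "\<pi> b = i2" using h(4-6) by (rule piD)
    ultimately show "\<pi> (a + b) = \<pi> a + \<pi> b" by simp
  next
    fix r a assume "a \<in> D"
    then obtain i1 b1 where h: "a = i1 + b1" "i1 \<in> I" "b1 \<in> A" unfolding D_def by blast
    then have "r * a = r * i1 + r * b1" "r * i1 \<in> I" "r * b1 \<in> A"
      using rideal_D[OF I(1)] A_lmult by (auto simp: distrib_left)
    then have "\<pi> (r * a) = r * i1" by (rule piD)
    moreover have "\<pi> a = i1" using h(1-3) by (rule piD)
    ultimately show "\<pi> (r * a) = r * \<pi> a" by simp
  qed
  have nz: "\<exists>a\<in>D. \<pi> a \<noteq> 0"
  proof -
    obtain i where i: "i \<in> I" "i \<noteq> 0" using I(2) rideal_D(1)[OF I(1)] by blast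
    have "0 \<in> A" unfolding A_def by simp
    then have "\<pi> i = i" using piD[of i i 0] i by simp
    then have pi: "\<pi> i \<noteq> 0" using i(2) by simp
    show ?thesis using ID[OF i(1)] pi by blast
  qed
  have h: "\<forall>r. \<forall>a\<in>D. \<pi> (a * f r) = \<pi> a * r"
  proof (intro allI ballI)
    fix r a assume "a \<in> D"
    then obtain i1 b1 where h: "a = i1 + b1" "i1 \<in> I" "b1 \<in> A" unfolding D_def by blast
    then have "a * f r = i1 * f r + b1 * f r" "i1 * f r \<in> I" "b1 * f r \<in> A"
      using rideal_D[OF I(1)] A_rmult by (auto simp: distrib_right)
    then have "\<pi> (a * f r) = i1 * f r" by (rule piD)
    also have "\<dots> = i1 * r" using fixed_mult[OF aut I(1) I(3) h(2)] .
    also have "\<dots> = \<pi> a * r" using piD[OF h(1-3)] by simp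
    finally show "\<pi> (a * f r) = \<pi> a * r" .
  qed
  show ?thesis unfolding X_inner_iff using rep nz h by blast
qed

lemma part_b1:
  fixes f :: "'a::ring_1 \<Rightarrow> 'a"
  assumes sp: "semiprime TYPE('a)" and aut: "ring_automorphism f"
    and comm: "\<forall>x y::'a. x * y = y * x" and vnr: "von_neumann_regular TYPE('a)"
    and X: "X_inner f"
  shows "\<exists>e. e * e = e \<and> e \<noteq> 0 \<and> (\<forall>r. f (e * r) = e * r)"
proof -
  obtain I where I: "rideal I" "I \<noteq> {0}" "\<forall>x\<in>I. f x = x"
    using part_a2[OF sp aut comm part_a1[OF comm X]] by blast
  obtain a where a: "a \<in> I" "a \<noteq> 0" using I(2) rideal_D(1)[OF I(1)] by blast
  obtain x where x: "a * x * a = a" using vnr unfolding von_neumann_regular_def by blast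
  define e where "e = a * x"
  have "e * e = e" unfolding e_def by (simp add: mult.assoc[symmetric] x)
  moreover have "e \<noteq> 0" using x a e_def by auto
  moreover have "\<forall>r. f (e * r) = e * r"
  proof
    fix r
    have "e * r = a * (x * r)" unfolding e_def by (simp add: mult.assoc)
    then have "e * r \<in> I" using rideal_D(5)[OF I(1) a(1)] by simp
    then show "f (e * r) = e * r" using I(3) by blast
  qed
  ultimately show ?thesis by blast
qed

lemma part_b2:
  fixes f :: "'a::ring_1 \<Rightarrow> 'a"
  assumes sp: "semiprime TYPE('a)" and aut: "ring_automorphism f"
    and comm: "\<forall>x y::'a. x * y = y * x"
    and E: "\<exists>e. e * e = e \<and> e \<noteq> 0 \<and> (\<forall>r. f (e * r) = e * r)"
  shows "X_inner f"
proof -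
  obtain e where e: "e * e = e" "e \<noteq> 0" "\<forall>r. f (e * r) = e * r" using E by blast
  define I where "I = {e * r |r. True}"
  have mem: "x \<in> I \<longleftrightarrow> (\<exists>r. x = e * r)" for x unfolding I_def by simp
  have rI: "rideal I" unfolding rideal_def
  proof (intro conjI ballI allI)
    show "0 \<in> I" unfolding mem by (rule exI[of _ 0]) simp
  next
    fix a b assume "a \<in> I" "b \<in> I"
    then obtain s1 s2 where "a = e * s1" "b = e * s2" unfolding mem by blast
    then have "a + b = e * (s1 + s2)" by (simp add: distrib_left)
    then show "a + b \<in> I" unfolding mem by (rule exI)
  next
    fix a assume "a \<in> I"
    then obtain s where "a = e * s" unfolding mem by blast
    then have "- a = e * (- s)" by simp
    then show "- a \<in> I" unfolding mem by (rule exI)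
  next
    fix a r assume "a \<in> I"
    then obtain s where s: "a = e * s" unfolding mem by blast
    have "r * a = (r * e) * s" using s by (simp add: mult.assoc)
    also have "\<dots> = (e * r) * s" by (subst comm[rule_format, of r e]) (rule refl)
    also have "\<dots> = e * (r * s)" by (simp add: mult.assoc)
    finally show "r * a \<in> I" unfolding mem by (rule exI)
    have "a * r = e * (s * r)" using s by (simp add: mult.assoc)
    then show "a * r \<in> I" unfolding mem by (rule exI)
  qed
  have "e = e * 1" by simp
  then have "e \<in> I" unfolding mem by (rule exI)
  then have nz: "I \<noteq> {0}" using e(2) by blast
  have fx: "\<forall>x\<in>I. f x = x"
  proof
    fix x assume "x \<in> I"
    then obtain s where "x = e * s" unfolding mem by blast
    then show "f x = x" using e(3) by simp
  qed
  show ?thesis using part_a4[OF sp aut comm rI nz fx] .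
qed



lemma ext_assoc: "a * b = (c::'a::ring_1) \<Longrightarrow> a * (b * z) = c * z"
  by (simp add: mult.assoc[symmetric])

lemma part_c:
  fixes f :: "'a::ring_1 \<Rightarrow> 'a"
  assumes aut: "ring_automorphism f" and vnr: "von_neumann_regular TYPE('a)"
    and X: "X_inner f"
  shows "corner_inner f"
proof -
  obtain J \<phi> where p0: "(J, \<phi>) \<in> mq_reps" and nz: "\<exists>a\<in>J. \<phi> a \<noteq> 0"
    and h: "\<forall>r. \<forall>a\<in>J. \<phi> (a * f r) = \<phi> a * r" using X X_inner_iff by blast
  have Jr: "rideal J" using reps_D(1)[OF p0] dense_rideal by blast
  have lin: "\<phi> (r * a) = r * \<phi> a" if "a \<in> J" for r a using reps_D(3)[OF p0 that] .
  have fm: "f (x * y) = f x * f y" for x y using aut_D(2)[OF aut] .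
  obtain b where b: "b \<in> J" "\<phi> b \<noteq> 0" using nz by blast
  obtain y where y: "b * y * b = b" using vnr unfolding von_neumann_regular_def by blast
  define g where "g = y * b"
  have gJ: "g \<in> J" unfolding g_def using rideal_D(4)[OF Jr b(1)] .
  have yb: "b * (y * b) = b" using y by (simp add: mult.assoc)
  have gg: "g * g = g" unfolding g_def by (simp add: mult.assoc yb)
  have bg: "b * g = b" unfolding g_def by (rule yb)
  define p where "p = \<phi> g"
  have "\<phi> b = b * p" using lin[OF gJ, of b] bg p_def by simp
  then have pnz: "p \<noteq> 0" using b by auto
  have gp: "g * p = p" using lin[OF gJ, of g] gg p_def by simp
  define g' where "g' = inv f g"
  have fg': "f g' = g" unfolding g'_def using aut_inv[OF aut] by simp
  have "f (g' * g') = f g'" using fm fg' gg by simp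
  then have g'g': "g' * g' = g'" using aut_inj[OF aut] by blast
  have R1: "p * x = f x * p" if x: "g' * x * g' = x" for x
  proof -
    have "f x = f (g' * x * g')" using x by simp
    then have fx: "f x = g * f x * g" using fm fg' by simp
    have "g * f x = g * (g * f x * g)" by (rule arg_cong[where f="\<lambda>z. g * z"], rule fx)
    also have "\<dots> = g * f x * g" by (simp add: mult.assoc[symmetric] gg)
    finally have gfx: "g * f x = g * f x * g" .
    have "p * x = \<phi> (g * f x)" using h gJ p_def by simp
    also have "\<dots> = \<phi> ((g * f x) * g)" using gfx by simp
    also have "\<dots> = g * f x * p" using lin[OF gJ] p_def by simp
    also have "\<dots> = (g * f x * g) * p" by (simp add: mult.assoc gp)
    also have "\<dots> = f x * p" using fx by simp
    finally show ?thesis .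
  qed
  obtain q where q0: "p * q * p = p" using vnr unfolding von_neumann_regular_def by blast
  have q: "p * (q * p) = p" using q0 by (simp add: mult.assoc)
  define q' where "q' = g' * q * g"
  have "g' * g' * g' = g'" by (simp add: g'g')
  then have pg': "p * g' = p" using R1[of g'] fg' gp by simp
  have pq'p: "p * (q' * p) = p" unfolding q'_def
    by (simp add: mult.assoc gp ext_assoc[OF pg'] q)
  define e' where "e' = q' * p"
  have qp: "q' * p = e'" unfolding e'_def ..
  have e'e': "e' * e' = e'" unfolding e'_def by (simp add: mult.assoc pq'p)
  have g'e': "g' * e' = e'" unfolding e'_def q'_def by (simp add: mult.assoc ext_assoc[OF g'g'])
  have e'g': "e' * g' = e'" unfolding e'_def by (simp add: mult.assoc pg')
  have ge'g: "g' * e' * g' = e'" by (simp add: g'e' e'g')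
  define e where "e = f e'"
  have inve: "inv f e = e'" unfolding e_def using aut_inv[OF aut] by simp
  have pe': "p * e' = p" using pq'p by (simp add: qp)
  have enz: "e \<noteq> 0"
  proof
    assume "e = 0"
    then have "f e' = f 0" using aut_zero[OF aut] e_def by simp
    then have "e' = 0" using aut_inj[OF aut] by blast
    then have "p = 0" using pe' by simp
    then show False using pnz by simp
  qed
  have ee: "e * e = e" unfolding e_def using fm[of e' e', symmetric] e'e' by simp
  have ep: "e * p = p" using R1[OF ge'g] pe' e_def by simp
  have R1': "y * p = p * inv f y \<and> e' * inv f y * e' = inv f y" if yy: "e * y * e = y" for y
  proof -
    define x where "x = inv f y"
    have fx: "f x = y" unfolding x_def using aut_inv[OF aut] by simp
    have "f (e' * x * e') = f x" using fm fx yy e_def by simp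
    then have x1: "e' * x * e' = x" using aut_inj[OF aut] by blast
    have "g' * x * g' = g' * (e' * x * e') * g'" using x1 by simp
    also have "\<dots> = (g' * e') * x * (e' * g')" by (simp add: mult.assoc)
    also have "\<dots> = x" using g'e' e'g' x1 by simp
    finally have "p * x = y * p" using R1 fx by simp
    then show ?thesis using x1 x_def by simp
  qed
  have claim: "p * (q' * e) = e"
  proof -
    define z where "z = e - p * (q' * e)"
    have "e * z = z" unfolding z_def
      by (simp add: right_diff_distrib mult.assoc[symmetric] ee ep)
    moreover have "z * e = z" unfolding z_def
      by (simp add: left_diff_distrib mult.assoc ee)
    ultimately have ez: "e * z * e = z" by simp
    have zp: "z * p = 0" unfolding z_def
      by (simp add: left_diff_distrib mult.assoc ep pq'p)
    define x where "x = inv f z"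
    have px: "p * x = 0" and x1: "e' * x * e' = x" using R1'[OF ez] zp x_def by auto
    have "x = e' * x * e'" using x1 by simp
    also have "\<dots> = q' * (p * x) * e'" unfolding e'_def by (simp add: mult.assoc)
    also have "\<dots> = 0" using px by simp
    finally have "x = 0" .
    then have "z = 0" using aut_inv(1)[OF aut, of z] x_def aut_zero[OF aut] by simp
    then show ?thesis unfolding z_def by simp
  qed
  define v where "v = e' * q' * e"
  have uv: "p * v = e" unfolding v_def
    by (simp add: mult.assoc ext_assoc[OF pe'] claim)
  have vu: "v * p = e'" unfolding v_def
    by (simp add: mult.assoc ep qp e'e')
  have "e * p * e' = p" using ep pe' by simp
  then have pc: "p \<in> corner e e'" unfolding corner_def by (metis (mono_tags, lifting) CollectI)
  have vc: "v \<in> corner e' e" unfolding corner_def v_def by blast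
  have F: "\<forall>x\<in>corner e' e'. f x = p * x * v"
  proof
    fix x assume "x \<in> corner e' e'"
    then obtain r where r: "x = e' * r * e'" unfolding corner_def by blast
    have "g' * x * g' = (g' * e') * r * (e' * g')" unfolding r by (simp add: mult.assoc)
    then have gx: "g' * x * g' = x" using g'e' e'g' r by simp
    have "p * x * v = f x * p * v" using R1[OF gx] by simp
    also have "\<dots> = f x * (p * v)" by (simp add: mult.assoc)
    also have "\<dots> = f x * e" using uv by simp
    finally have 1: "p * x * v = f x * e" .
    have fx: "f x = e * f r * e" unfolding r e_def by (simp add: fm)
    have "f x * e = e * f r * (e * e)" unfolding fx by (simp add: mult.assoc)
    then have "f x * e = f x" using ee fx by simp
    then show "f x = p * x * v" using 1 by simp
  qed
  have G: "\<forall>y\<in>corner e e. inv f y = v * y * p"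
  proof
    fix y assume "y \<in> corner e e"
    then obtain r where r: "y = e * r * e" unfolding corner_def by blast
    have "e * y * e = (e * e) * r * (e * e)" unfolding r by (simp add: mult.assoc)
    then have "e * y * e = y" using ee r by simp
    then have R: "y * p = p * inv f y" "e' * inv f y * e' = inv f y" using R1' by auto
    have "v * y * p = v * (y * p)" by (simp add: mult.assoc)
    also have "\<dots> = (v * p) * inv f y" using R(1) by (simp add: mult.assoc)
    also have "\<dots> = e' * inv f y" using vu by simp
    also have "\<dots> = e' * (e' * inv f y * e')" using R(2) by simp
    also have "\<dots> = (e' * e') * inv f y * e'" by (simp add: mult.assoc)
    also have "\<dots> = inv f y" using R(2) e'e' by simp
    finally show "inv f y = v * y * p" by simp
  qed
  show ?thesis unfolding corner_inner_def Let_def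
  proof (rule exI[of _ e], unfold inve)
  qed (use ee enz pc vc uv vu F G in blast)
qed



theorem proposition2p6:
  fixes f :: "'a::ring_1 \<Rightarrow> 'a"
  assumes "semiprime TYPE('a)" and "ring_automorphism f"
  shows "((\<forall>x y::'a. x * y = y * x) \<longrightarrow>
            ((X_inner f \<longleftrightarrow> ann (range (\<lambda>r. r - f r)) \<noteq> {0}) \<and>
             (ann (range (\<lambda>r. r - f r)) \<noteq> {0} \<longleftrightarrow>
                (\<exists>I. rideal I \<and> I \<noteq> {0} \<and> (\<forall>x\<in>I. f x = x)))))
       \<and> ((\<forall>x y::'a. x * y = y * x) \<and> von_neumann_regular TYPE('a) \<longrightarrow>
            (X_inner f \<longleftrightarrow> (\<exists>e. e * e = e \<and> e \<noteq> 0 \<and> (\<forall>r. f (e * r) = e * r))))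
       \<and> (von_neumann_regular TYPE('a) \<and> X_inner f \<longrightarrow> corner_inner f)"
proof (intro conjI impI)
  assume comm: "\<forall>x y::'a. x * y = y * x"
  show "X_inner f \<longleftrightarrow> ann (range (\<lambda>r. r - f r)) \<noteq> {0}"
    using part_a1[OF comm] part_a2[OF assms comm] part_a4[OF assms comm] by blast
  show "ann (range (\<lambda>r. r - f r)) \<noteq> {0} \<longleftrightarrow> (\<exists>I. rideal I \<and> I \<noteq> {0} \<and> (\<forall>x\<in>I. f x = x))"
    using part_a2[OF assms comm] part_a3[OF assms(2) comm] by blast
next
  assume h: "(\<forall>x y::'a. x * y = y * x) \<and> von_neumann_regular TYPE('a)"
  show "X_inner f \<longleftrightarrow> (\<exists>e. e * e = e \<and> e \<noteq> 0 \<and> (\<forall>r. f (e * r) = e * r))"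
    using part_b1[OF assms] part_b2[OF assms] h by blast
next
  assume "von_neumann_regular TYPE('a) \<and> X_inner f"
  then show "corner_inner f" using part_c[OF assms(2)] by blast
qed

end
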